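(* Assume (C), (I) and (H). Then $Q^*\in\mathcal Q$ is a weak equilibrium if and only if $\Gamma^{Q^*}_i(Q^*_i)\ge\Gamma^{Q^*}_i(Q_i)$ for all $i\in S$ and all $Q\in\mathcal Q$.
   Context: Let $S=\{1,\dots,N\}$, $N\in\mathbb N$. For $i\in S$ let $E_i=\{q=(q_1,\dots,q_N)\in\mathbb R^N: q_j\ge0\text{ for }j\ne i,\ q_i=-\sum_{j\ne i}q_j\}$ and let $D_i\subseteq E_i$ be given. Let $\mathcal Q=\{Q\in\mathbb R^{N\times N}: Q_i\in D_i\ \forall i\in S\}$, where $Q_i$ is the $i$-th row of $Q$. For $Q\in\mathcal Q$, $X=(X_t)_{t\ge0}$ is a time-homogeneous continuous-time Markov chain on $S$ with generator $Q$, and $\mathbb E_{i,Q}$ is the expectation given $X_0=i$. A payoff function $f$ assigns a real number $f(t,i,\mathbf q)$ to each $t\ge0$, $i\in S$, $\mathbf q\in D_i$. Conditions: (C) $t\mapsto f(t,i,\mathbf q)$ is continuous on $[0,\infty)$ for each $i,\mathbf q$; (I) $\int_0^\infty\sup_{i\in S,\mathbf q\in D_i,\|\mathbf q\|\le c}|f(t,i,\mathbf q)|\,dt<\infty$ for every $c>0$; (H) there is a nonnegative function $h(t,\varepsilon;i,\mathbf q)$ with $|f(t+\varepsilon,i,\mathbf q)-f(t,i,\mathbf q)|\le h(t,\varepsilon;i,\mathbf q)$ for all $t\ge0,\varepsilon>0,i,\mathbf q$, $h$ nondecreasing in $\varepsilon$, $\lim_{\varepsilon\downarrow0}h=0$,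 and $\int_0^\infty h(t,\varepsilon;i,\mathbf q)dt<\infty$ for small $\varepsilon>0$. Define $F(i,Q)=\mathbb E_{i,Q}[\int_0^\infty f(t,X_t,Q_{X_t})dt]$ and $F(Q)=(F(1,Q),\dots,F(N,Q))$. For $Q,Q'\in\mathcal Q$, $\varepsilon>0$, $Q\otimes_\varepsilon Q'$ means $X$ evolves with generator $Q$ on $[0,\varepsilon]$ and $Q'$ on $(\varepsilon,\infty)$, and $F(i,Q\otimes_\varepsilon Q')$ is the corresponding expected payoff $\mathbb E_i[\int_0^\varepsilon f(t,X_t,Q_{X_t})dt+\int_\varepsilon^\infty f(t,X_t,Q'_{X_t})dt]$. $Q^*\in\mathcal Q$ is a weak equilibrium if $\liminf_{\varepsilon\downarrow0}\varepsilon^{-1}(F(i,Q^* )-F(i,Q\otimes_\varepsilon Q^* ))\ge0$ for all $Q\in\mathcal Q$, $i\in S$. For $Q^*\in\mathcal Q$, $i\in S$, $\mathbf q\in D_i$, $\Gamma^{Q^*}_i(\mathbf q)=f(0,i,\mathbf q)+\mathbf q\cdot F(Q^* )$. *)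

theory Defs
  imports "HOL-Analysis.Analysis"
begin

text \<open>State space S = the finite type 'n (with N = CARD('n)). A generator Q is a
  matrix real^'n^'n, its i-th row is Q $ i.\<close>

definition Erow :: "'n::finite \<Rightarrow> (real^'n) set" where
  "Erow i = {q. (\<forall>j. j \<noteq> i \<longrightarrow> q $ j \<ge> 0) \<and> q $ i = - (\<Sum>j\<in>UNIV - {i}. q $ j)}"

definition admissible :: "('n::finite \<Rightarrow> (real^'n) set) \<Rightarrow> (real^'n^'n) set" where
  "admissible D = {Q. \<forall>i. Q $ i \<in> D i}"

fun mpow :: "real^'n::finite^'n \<Rightarrow> nat \<Rightarrow> real^'n^'n" where
  "mpow Q 0 = mat 1"
| "mpow Q (Suc n) = Q ** mpow Q n"

text \<open>Transition matrix P_t = exp(tQ) of the time-homogeneous Markov chain with generator Q: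
  P_t(i,j) = Pr(X_t = j | X_0 = i).\<close>
definition trans :: "real^'n::finite^'n \<Rightarrow> real \<Rightarrow> real^'n^'n" where
  "trans Q t = (\<Sum>n. (t ^ n / fact n) *\<^sub>R mpow Q n)"

text \<open>F(i,Q) = E_{i,Q}[ int_0^oo f(t,X_t,Q_{X_t}) dt ], written via the transition matrices.\<close>
definition payoff :: "(real \<Rightarrow> 'n::finite \<Rightarrow> real^'n \<Rightarrow> real) \<Rightarrow> 'n \<Rightarrow> real^'n^'n \<Rightarrow> real" where
  "payoff f i Q = (LBINT t:{0..}. (\<Sum>j\<in>UNIV. trans Q t $ i $ j * f t j (Q $ j)))"

text \<open>F(i, Q \<otimes>_eps Q'): generator Q on [0,eps], Q' afterwards.\<close>
definition payoff_concat ::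
  "(real \<Rightarrow> 'n::finite \<Rightarrow> real^'n \<Rightarrow> real) \<Rightarrow> 'n \<Rightarrow> real^'n^'n \<Rightarrow> real \<Rightarrow> real^'n^'n \<Rightarrow> real" where
  "payoff_concat f i Q eps Q' =
     (LBINT t:{0..eps}. (\<Sum>j\<in>UNIV. trans Q t $ i $ j * f t j (Q $ j)))
   + (LBINT t:{eps<..}. (\<Sum>j\<in>UNIV. (trans Q eps ** trans Q' (t - eps)) $ i $ j * f t j (Q' $ j)))"

definition weak_equilibrium ::
  "('n::finite \<Rightarrow> (real^'n) set) \<Rightarrow> (real \<Rightarrow> 'n \<Rightarrow> real^'n \<Rightarrow> real) \<Rightarrow> real^'n^'n \<Rightarrow> bool" where
  "weak_equilibrium D f Qs \<longleftrightarrow> Qs \<in> admissible D \<and>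
     (\<forall>Q\<in>admissible D. \<forall>i.
        Liminf (at_right 0) (\<lambda>eps. ereal ((payoff f i Qs - payoff_concat f i Q eps Qs) / eps)) \<ge> 0)"

definition Gamma ::
  "(real \<Rightarrow> 'n::finite \<Rightarrow> real^'n \<Rightarrow> real) \<Rightarrow> real^'n^'n \<Rightarrow> 'n \<Rightarrow> real^'n \<Rightarrow> real" where
  "Gamma f Qs i q = f 0 i q + q \<bullet> (\<chi> j. payoff f j Qs)"

definition cond_C :: "('n::finite \<Rightarrow> (real^'n) set) \<Rightarrow> (real \<Rightarrow> 'n \<Rightarrow> real^'n \<Rightarrow> real) \<Rightarrow> bool" where
  "cond_C D f \<longleftrightarrow> (\<forall>i. \<forall>q\<in>D i. continuous_on {0..} (\<lambda>t. f t i q))"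

definition cond_I :: "('n::finite \<Rightarrow> (real^'n) set) \<Rightarrow> (real \<Rightarrow> 'n \<Rightarrow> real^'n \<Rightarrow> real) \<Rightarrow> bool" where
  "cond_I D f \<longleftrightarrow> (\<forall>c>0.
     (\<integral>\<^sup>+ t. (SUP iq\<in>{(i,q). q \<in> D i \<and> norm q \<le> c}. ennreal \<bar>f t (fst iq) (snd iq)\<bar>)
        * indicator {0..} t \<partial>lborel) < \<infinity>)"

definition cond_H :: "('n::finite \<Rightarrow> (real^'n) set) \<Rightarrow> (real \<Rightarrow> 'n \<Rightarrow> real^'n \<Rightarrow> real) \<Rightarrow> bool" where
  "cond_H D f \<longleftrightarrow> (\<exists>h :: real \<Rightarrow> real \<Rightarrow> 'n \<Rightarrow> real^'n \<Rightarrow> real.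
     (\<forall>t eps i q. t \<ge> 0 \<longrightarrow> eps > 0 \<longrightarrow> q \<in> D i \<longrightarrow>
        0 \<le> h t eps i q \<and> \<bar>f (t + eps) i q - f t i q\<bar> \<le> h t eps i q) \<and>
     (\<forall>t i q. t \<ge> 0 \<longrightarrow> q \<in> D i \<longrightarrow> mono_on {0<..} (\<lambda>eps. h t eps i q)) \<and>
     (\<forall>t i q. t \<ge> 0 \<longrightarrow> q \<in> D i \<longrightarrow> ((\<lambda>eps. h t eps i q) \<longlongrightarrow> 0) (at_right 0)) \<and>
     (\<forall>i. \<forall>q\<in>D i. \<exists>e0>0. \<forall>eps. 0 < eps \<and> eps < e0 \<longrightarrow>
        (\<integral>\<^sup>+ t. ennreal (h t eps i q) * indicator {0..} t \<partial>lborel) < \<infinity>))"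

end

theory Submission
  imports Defs
begin


definition nb :: "real^'n::finite^'n \<Rightarrow> real" where
  "nb X = (\<Sum>i\<in>UNIV. \<Sum>j\<in>UNIV. \<bar>X $ i $ j\<bar>)"

lemma nb_nonneg: "0 \<le> nb X"
  unfolding nb_def by (intro sum_nonneg) auto

lemma row_le_nb: "(\<Sum>k\<in>UNIV. \<bar>X $ i $ k\<bar>) \<le> nb X"
proof -
  have "(\<Sum>k\<in>UNIV. \<bar>X $ i $ k\<bar>) \<le> (\<Sum>i\<in>UNIV. \<Sum>j\<in>UNIV. \<bar>X $ i $ j\<bar>)"
    by (rule member_le_sum[where f="\<lambda>i. \<Sum>j\<in>UNIV. \<bar>X $ i $ j\<bar>"]) (auto intro: sum_nonneg)
  then show ?thesis by (simp add: nb_def)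
qed

lemma mpow_bound: "\<bar>mpow X n $ i $ j\<bar> \<le> nb X ^ n"
proof (induction n arbitrary: i j)
  case 0
  then show ?case by (simp add: mat_def)
next
  case (Suc n)
  have "\<bar>mpow X (Suc n) $ i $ j\<bar> = \<bar>\<Sum>k\<in>UNIV. X $ i $ k * mpow X n $ k $ j\<bar>"
    by (simp add: matrix_matrix_mult_def)
  also have "\<dots> \<le> (\<Sum>k\<in>UNIV. \<bar>X $ i $ k\<bar> * nb X ^ n)"
    by (rule order_trans[OF sum_abs]) (auto intro!: sum_mono mult_left_mono Suc simp: abs_mult)
  also have "\<dots> = (\<Sum>k\<in>UNIV. \<bar>X $ i $ k\<bar>) * nb X ^ n"
    by (simp add: sum_distrib_right)
  also have "\<dots> \<le> nb X * nb X ^ n"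
    by (rule mult_right_mono[OF row_le_nb]) (simp add: nb_nonneg)
  finally show ?case by simp
qed

lemma mpow_add: "mpow X (m + k) = mpow X m ** mpow X k"
  by (induction m) (auto simp: matrix_mul_assoc)

lemma mpow_comm2: "X ** Y = Y ** X \<Longrightarrow> mpow X n ** Y = Y ** mpow X n"
proof (induction n)
  case (Suc n)
  have "mpow X (Suc n) ** Y = X ** (mpow X n ** Y)" by (simp add: matrix_mul_assoc)
  also have "\<dots> = (X ** Y) ** mpow X n" using Suc by (simp add: matrix_mul_assoc)
  also have "\<dots> = Y ** mpow X (Suc n)" using Suc by (simp add: matrix_mul_assoc)
  finally show ?case .
qed simp

lemma mpow_comm: "mpow X n ** X = X ** mpow X n"
  by (rule mpow_comm2) simp


definition SX :: "real^'n::finite^'n \<Rightarrow> nat \<Rightarrow> real^'n^'n" where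
  "SX X n = (1 / fact n) *\<^sub>R mpow X n"

lemma SX_bound: "\<bar>SX X n $ i $ j\<bar> \<le> nb X ^ n / fact n"
  using mpow_bound[of X n i j] by (simp add: SX_def divide_right_mono)

lemma summable_exp_real: "summable (\<lambda>n. (x::real) ^ n / fact n)"
  using summable_exp[of x] by (simp add: field_simps)

lemma SX_abs_summable: "summable (\<lambda>n. \<bar>SX X n $ i $ j\<bar>)"
  by (rule summable_comparison_test'[OF summable_exp_real[of "nb X"]]) (use SX_bound in auto)

lemma SX_summable: "summable (\<lambda>n. SX X n $ i $ j)"
  by (rule summable_rabs_cancel[OF SX_abs_summable])

definition Emat :: "real^'n::finite^'n \<Rightarrow> real^'n^'n" where
  "Emat X = (\<chi> i. \<chi> j. \<Sum>n. SX X n $ i $ j)"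

lemma Emat_sums: "(\<lambda>n. SX X n $ i $ j) sums (Emat X $ i $ j)"
  unfolding Emat_def by (simp add: summable_sums[OF SX_summable])

lemma mm_add_r: "(A + B) ** (C::real^'n::finite^'n) = A ** C + B ** C"
  by (simp add: matrix_matrix_mult_def vec_eq_iff sum.distrib distrib_right)

lemma mm_sum_l: "(A::real^'n::finite^'n) ** sum f S = (\<Sum>x\<in>S. A ** f x)"
  by (induction S rule: infinite_finite_induct) (auto simp: matrix_add_ldistrib)

lemma mm_sum_r: "sum f S ** (A::real^'n::finite^'n) = (\<Sum>x\<in>S. f x ** A)"
  by (induction S rule: infinite_finite_induct) (auto simp: mm_add_r)

lemma SX_Suc: "SX X (Suc n) = (1 / real (Suc n)) *\<^sub>R (X ** SX X n)"
proof -
  have 1: "X ** ((1/fact n) *\<^sub>R mpow X n) = (1/fact n) *\<^sub>R (X ** mpow X n)"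
    by (simp add: matrix_scalar_ac scalar_matrix_assoc)
  have 2: "(1/real(Suc n)) * (1/fact n) = (1 / fact (Suc n) :: real)"
    by (simp add: fact_Suc)
  show ?thesis unfolding SX_def 1 scaleR_scaleR 2 by simp
qed

lemma times_SX: "X ** SX X n = real (Suc n) *\<^sub>R SX X (Suc n)"
  by (simp add: SX_Suc)

lemma SX_comm: "X ** Y = Y ** X \<Longrightarrow> SX X n ** Y = Y ** SX X n"
  by (simp add: SX_def matrix_scalar_ac mpow_comm2 flip: scalar_matrix_assoc)

lemma SX_add_commuting:
  fixes X Y :: "real^'n::finite^'n"
  assumes comm: "X ** Y = Y ** X"
  shows "SX (X + Y) n = (\<Sum>i\<le>n. SX X i ** SX Y (n - i))"
proof (induct n)
  case 0
  show ?case
    unfolding SX_def by simp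
next
  case (Suc n)
  let ?S = SX
  have S_comm: "\<And>n. ?S X n ** Y = Y ** ?S X n"
    by (rule SX_comm[OF comm])
  have "real (Suc n) *\<^sub>R ?S (X + Y) (Suc n) = (X + Y) ** (\<Sum>i\<le>n. ?S X i ** ?S Y (n - i))"
    by (metis Suc.hyps times_SX)
  also have "\<dots> = X ** (\<Sum>i\<le>n. ?S X i ** ?S Y (n - i)) + Y ** (\<Sum>i\<le>n. ?S X i ** ?S Y (n - i))"
    by (rule mm_add_r)
  also have "\<dots> = (\<Sum>i\<le>n. (X ** ?S X i) ** ?S Y (n - i)) + (\<Sum>i\<le>n. (?S X i ** Y) ** ?S Y (n - i))"
    by (simp add: mm_sum_l matrix_mul_assoc S_comm)
  also have "\<dots> = (\<Sum>i\<le>n. (X ** ?S X i) ** ?S Y (n - i)) + (\<Sum>i\<le>n. ?S X i ** (Y ** ?S Y (n - i)))"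
    by (simp add: matrix_mul_assoc)
  also have "\<dots> = (\<Sum>i\<le>n. real (Suc i) *\<^sub>R (?S X (Suc i) ** ?S Y (n - i)))
                + (\<Sum>i\<le>n. real (Suc n - i) *\<^sub>R (?S X i ** ?S Y (Suc n - i)))"
    by (simp add: times_SX Suc_diff_le matrix_scalar_ac flip: scalar_matrix_assoc)
  also have "(\<Sum>i\<le>n. real (Suc i) *\<^sub>R (?S X (Suc i) ** ?S Y (n - i)))
           = (\<Sum>i\<le>Suc n. real i *\<^sub>R (?S X i ** ?S Y (Suc n - i)))"
    by (subst sum.atMost_Suc_shift) simp
  also have "(\<Sum>i\<le>n. real (Suc n - i) *\<^sub>R (?S X i ** ?S Y (Suc n - i)))
           = (\<Sum>i\<le>Suc n. real (Suc n - i) *\<^sub>R (?S X i ** ?S Y (Suc n - i)))"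
    by simp
  also have "(\<Sum>i\<le>Suc n. real i *\<^sub>R (?S X i ** ?S Y (Suc n - i)))
           + (\<Sum>i\<le>Suc n. real (Suc n - i) *\<^sub>R (?S X i ** ?S Y (Suc n - i)))
           = (\<Sum>i\<le>Suc n. real (Suc n) *\<^sub>R (?S X i ** ?S Y (Suc n - i)))"
    by (simp flip: sum.distrib scaleR_add_left of_nat_add)
  also have "\<dots> = real (Suc n) *\<^sub>R (\<Sum>i\<le>Suc n. ?S X i ** ?S Y (Suc n - i))"
    by (simp only: scaleR_right.sum)
  finally show "?S (X + Y) (Suc n) = (\<Sum>i\<le>Suc n. ?S X i ** ?S Y (Suc n - i))"
    by (simp del: sum.cl_ivl_Suc)
qed

lemma Emat_entry: "Emat X $ i $ j = (\<Sum>n. SX X n $ i $ j)"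
  by (simp add: Emat_def)

lemma Emat_add:
  fixes X Y :: "real^'n::finite^'n"
  assumes comm: "X ** Y = Y ** X"
  shows "Emat (X + Y) = Emat X ** Emat Y"
proof -
  have "Emat (X + Y) $ i $ j = (Emat X ** Emat Y) $ i $ j" for i j
  proof -
    have c: "(\<lambda>n. \<Sum>m\<le>n. SX X m $ i $ k * SX Y (n - m) $ k $ j) sums (Emat X $ i $ k * Emat Y $ k $ j)" for k
    proof -
      have "(\<lambda>n. \<Sum>m\<le>n. SX X m $ i $ k * SX Y (n - m) $ k $ j) sums
          ((\<Sum>n. SX X n $ i $ k) * (\<Sum>n. SX Y n $ k $ j))"
        by (rule Cauchy_product_sums) (use SX_abs_summable in auto)
      then show ?thesis by (simp add: Emat_entry)
    qed
    have "(\<lambda>n. \<Sum>k\<in>UNIV. \<Sum>m\<le>n. SX X m $ i $ k * SX Y (n - m) $ k $ j) sums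
        (\<Sum>k\<in>UNIV. Emat X $ i $ k * Emat Y $ k $ j)"
      by (rule sums_sum) (rule c)
    moreover have "(\<Sum>k\<in>UNIV. \<Sum>m\<le>n. SX X m $ i $ k * SX Y (n - m) $ k $ j) = SX (X + Y) n $ i $ j" for n
      by (simp add: SX_add_commuting[OF comm] matrix_matrix_mult_def sum.swap[of _ UNIV])
    ultimately have "(\<lambda>n. SX (X + Y) n $ i $ j) sums (\<Sum>k\<in>UNIV. Emat X $ i $ k * Emat Y $ k $ j)"
      by simp
    then show ?thesis
      using Emat_sums[of "X+Y" i j] sums_unique2 by (simp add: matrix_matrix_mult_def)
  qed
  then show ?thesis by (simp add: vec_eq_iff)
qed

lemma mpow_scale: "mpow (c *\<^sub>R X) n = (c ^ n) *\<^sub>R mpow X n"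
  by (induction n) (auto simp: matrix_scalar_ac simp flip: scalar_matrix_assoc)

lemma SX_scale: "SX (t *\<^sub>R Q) n = (t ^ n / fact n) *\<^sub>R mpow Q n"
  by (simp add: SX_def mpow_scale)

lemma SX_sums_Emat: "SX X sums Emat X"
  unfolding sums_def
proof (rule vec_tendstoI)
  fix i
  show "((\<lambda>n. (\<Sum>k<n. SX X k) $ i) \<longlongrightarrow> Emat X $ i) sequentially"
  proof (rule vec_tendstoI)
    fix j
    show "((\<lambda>n. (\<Sum>k<n. SX X k) $ i $ j) \<longlongrightarrow> Emat X $ i $ j) sequentially"
      using Emat_sums[of X i j] by (simp add: sums_def)
  qed
qed

lemma trans_Emat: "trans Q t = Emat (t *\<^sub>R Q)"
proof -
  have "SX (t *\<^sub>R Q) = (\<lambda>n. (t^n/fact n) *\<^sub>R mpow Q n)"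
    by (rule ext) (simp add: SX_scale)
  then show ?thesis
    unfolding trans_def using SX_sums_Emat[of "t *\<^sub>R Q"] by (simp add: sums_iff)
qed

lemma trans_add: "trans Q (s + t) = trans Q s ** trans Q t"
proof -
  have "(s *\<^sub>R Q) ** (t *\<^sub>R Q) = (t *\<^sub>R Q) ** (s *\<^sub>R Q)"
    by (simp add: matrix_scalar_ac flip: scalar_matrix_assoc)
  then show ?thesis
    by (simp add: trans_Emat scaleR_add_left Emat_add)
qed

lemma mpow_diag: "mpow (a *\<^sub>R mat 1) n = (a ^ n) *\<^sub>R (mat 1 :: real^'n::finite^'n)"
  by (simp add: mpow_scale) (induction n, auto)

lemma Emat_diag: "Emat (a *\<^sub>R mat 1) = exp a *\<^sub>R (mat 1 :: real^'n::finite^'n)"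
proof -
  have "Emat (a *\<^sub>R mat 1) $ i $ j = (exp a *\<^sub>R (mat 1 :: real^'n^'n)) $ i $ j" for i j
  proof -
    have "(\<lambda>n. a ^ n /\<^sub>R fact n * (mat 1 :: real^'n^'n) $ i $ j) sums (exp a * (mat 1 :: real^'n^'n) $ i $ j)"
      by (rule sums_mult2[OF exp_converges])
    moreover have "SX (a *\<^sub>R mat 1) n $ i $ j = a ^ n /\<^sub>R fact n * (mat 1 :: real^'n^'n) $ i $ j" for n
      by (simp add: SX_def mpow_diag divide_inverse_commute)
    ultimately show ?thesis using Emat_sums[of "a *\<^sub>R mat 1" i j] sums_unique2 by force
  qed
  then show ?thesis by (simp add: vec_eq_iff)
qed

lemma Emat_shift: "Emat (X + a *\<^sub>R mat 1) = exp a *\<^sub>R Emat (X::real^'n::finite^'n)"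
proof -
  have "X ** (a *\<^sub>R mat 1) = (a *\<^sub>R mat 1) ** X"
    by (simp add: matrix_scalar_ac flip: scalar_matrix_assoc)
  then show ?thesis
    by (simp add: Emat_add Emat_diag matrix_scalar_ac)
qed

lemma trans_entry_powser: "trans Q t $ i $ j = (\<Sum>n. (mpow Q n $ i $ j / fact n) * t ^ n)"
  unfolding trans_Emat Emat_entry
  by (intro arg_cong[where f=suminf] ext) (simp add: SX_scale)

lemma powser_coeff_summable: "summable (\<lambda>n. (mpow Q n $ i $ j / fact n) * t ^ n)"
proof (rule summable_rabs_cancel, rule summable_comparison_test'[OF summable_exp_real[of "nb Q * \<bar>t\<bar>"]])
  fix n
  have "\<bar>(mpow Q n $ i $ j / fact n) * t ^ n\<bar> = \<bar>mpow Q n $ i $ j\<bar> * \<bar>t\<bar> ^ n / fact n"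
    by (simp add: abs_mult power_abs)
  also have "\<dots> \<le> nb Q ^ n * \<bar>t\<bar> ^ n / fact n"
    by (intro divide_right_mono mult_right_mono mpow_bound) auto
  finally show "norm \<bar>(mpow Q n $ i $ j / fact n) * t ^ n\<bar> \<le> (nb Q * \<bar>t\<bar>) ^ n / fact n"
    by (simp add: power_mult_distrib)
qed

lemma trans_deriv: "((\<lambda>t. trans Q t $ i $ j) has_real_derivative
     (\<Sum>n. diffs (\<lambda>n. mpow Q n $ i $ j / fact n) n * t ^ n)) (at t)"
  unfolding trans_entry_powser
  by (rule termdiffs_strong_converges_everywhere) (rule powser_coeff_summable)

lemma trans_deriv0: "((\<lambda>t. trans Q t $ i $ j) has_real_derivative Q $ i $ j) (at 0)"
  using trans_deriv[of Q i j 0] unfolding powser_zero by (simp add: diffs_def)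

lemma trans_isCont: "isCont (\<lambda>t. trans Q t $ i $ j) t"
  using trans_deriv DERIV_isCont by blast

lemma trans_0: "trans Q 0 = mat 1"
  unfolding vec_eq_iff trans_entry_powser powser_zero by (simp add: mat_def)



definition gen :: "real^'n::finite^'n \<Rightarrow> bool" where
  "gen Q \<longleftrightarrow> (\<forall>i. Q $ i \<in> Erow i)"

lemma gen_rowsum: "gen Q \<Longrightarrow> (\<Sum>j\<in>UNIV. Q $ i $ j) = 0"
proof -
  assume "gen Q"
  then have "Q $ i $ i = - (\<Sum>j\<in>UNIV - {i}. Q $ i $ j)"
    by (auto simp: gen_def Erow_def)
  moreover have "(\<Sum>j\<in>UNIV. Q $ i $ j) = Q $ i $ i + (\<Sum>j\<in>UNIV - {i}. Q $ i $ j)"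
    by (simp add: sum.remove)
  ultimately show ?thesis by simp
qed

lemma gen_offdiag: "gen Q \<Longrightarrow> i \<noteq> j \<Longrightarrow> 0 \<le> Q $ i $ j"
  by (auto simp: gen_def Erow_def)

lemma mpow_rowsum: "gen Q \<Longrightarrow> (\<Sum>j\<in>UNIV. mpow Q n $ k $ j) = (if n = 0 then 1 else 0)"
proof (induction n arbitrary: k)
  case 0
  then show ?case by (simp add: mat_def)
next
  case (Suc n)
  have "(\<Sum>j\<in>UNIV. mpow Q (Suc n) $ k $ j) = (\<Sum>l\<in>UNIV. Q $ k $ l * (\<Sum>j\<in>UNIV. mpow Q n $ l $ j))"
    by (simp add: matrix_matrix_mult_def sum_distrib_left) (rule sum.swap)
  also have "\<dots> = (\<Sum>l\<in>UNIV. Q $ k $ l) * (if n = 0 then 1 else 0)"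
    using Suc by (simp add: sum_distrib_right)
  also have "\<dots> = 0" using gen_rowsum[OF Suc.prems] by simp
  finally show ?case by simp
qed

lemma trans_rowsum: "gen Q \<Longrightarrow> (\<Sum>j\<in>UNIV. trans Q t $ i $ j) = 1"
proof -
  assume g: "gen Q"
  have "(\<Sum>j\<in>UNIV. trans Q t $ i $ j) = (\<Sum>n. \<Sum>j\<in>UNIV. (mpow Q n $ i $ j / fact n) * t ^ n)"
    unfolding trans_entry_powser by (rule suminf_sum[symmetric]) (rule powser_coeff_summable)
  also have "\<dots> = (\<Sum>n. if n = 0 then 1 else 0)"
  proof (intro arg_cong[where f=suminf] ext)
    fix n
    have "(\<Sum>j\<in>UNIV. (mpow Q n $ i $ j / fact n) * t ^ n) = (\<Sum>j\<in>UNIV. mpow Q n $ i $ j) * t ^ n / fact n"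
      by (simp add: sum_distrib_right sum_divide_distrib)
    then show "(\<Sum>j\<in>UNIV. (mpow Q n $ i $ j / fact n) * t ^ n) = (if n = 0 then 1 else 0)"
      using mpow_rowsum[OF g, of n i] by simp
  qed
  also have "\<dots> = 1"
  proof -
    have "(\<lambda>n. if n = 0 then 1 else 0::real) sums 1" using sums_single[of 0 "\<lambda>_. 1::real"] by simp
    then show ?thesis by (simp add: sums_iff)
  qed
  finally show ?thesis .
qed

lemma entry_le_nb: "\<bar>X $ i $ j\<bar> \<le> nb X"
proof -
  have "\<bar>X $ i $ j\<bar> \<le> (\<Sum>k\<in>UNIV. \<bar>X $ i $ k\<bar>)"
    by (rule member_le_sum[where f="\<lambda>k. \<bar>X $ i $ k\<bar>"]) auto
  then show ?thesis using row_le_nb[of X i] by linarith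
qed

lemma trans_nonneg_aux:
  assumes "\<And>i j. 0 \<le> A $ i $ j" "0 \<le> t"
  shows "0 \<le> trans A t $ i $ j"
proof -
  have mp: "0 \<le> mpow A n $ i $ j" for n i j
  proof (induction n arbitrary: i j)
    case 0 then show ?case by (simp add: mat_def)
  next
    case (Suc n) then show ?case
      by (simp add: matrix_matrix_mult_def assms sum_nonneg)
  qed
  show ?thesis unfolding trans_entry_powser
    by (rule suminf_nonneg[OF powser_coeff_summable]) (simp add: mp assms)
qed

lemma trans_nonneg: "gen Q \<Longrightarrow> 0 \<le> t \<Longrightarrow> 0 \<le> trans Q t $ i $ j"
proof -
  assume g: "gen Q" and t: "0 \<le> t"
  define c where "c = nb Q"
  define A where "A = Q + c *\<^sub>R mat 1"
  have A: "0 \<le> A $ i $ j" for i j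
  proof (cases "i = j")
    case True
    then show ?thesis using entry_le_nb[of Q i i] by (simp add: A_def c_def mat_def)
  next
    case False
    then show ?thesis using gen_offdiag[OF g False] by (simp add: A_def mat_def)
  qed
  have "trans A t = exp (t * c) *\<^sub>R trans Q t"
    unfolding trans_Emat A_def scaleR_add_right scaleR_scaleR Emat_shift ..
  then have "trans Q t $ i $ j = trans A t $ i $ j / exp (t * c)"
    by simp
  then show ?thesis using trans_nonneg_aux[OF A t, of i j] by simp
qed

lemma trans_le1: "gen Q \<Longrightarrow> 0 \<le> t \<Longrightarrow> trans Q t $ i $ j \<le> 1"
proof -
  assume g: "gen Q" and t: "0 \<le> t"
  have "trans Q t $ i $ j \<le> (\<Sum>k\<in>UNIV. trans Q t $ i $ k)"
    by (rule member_le_sum[where f="\<lambda>k. trans Q t $ i $ k"]) (simp_all add: trans_nonneg[OF g t])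
  then show ?thesis using trans_rowsum[OF g] by simp
qed

lemma trans_abs_le1: "gen Q \<Longrightarrow> 0 \<le> t \<Longrightarrow> \<bar>trans Q t $ i $ j\<bar> \<le> 1"
  using trans_nonneg[of Q t i j] trans_le1[of Q t i j] by simp




lemma int_of_nn:
  fixes u :: "real \<Rightarrow> real"
  assumes "continuous_on {0..} u" "(\<integral>\<^sup>+t. ennreal \<bar>u t\<bar> * indicator {0..} t \<partial>lborel) < \<infinity>"
  shows "set_integrable lborel {0..} u"
  unfolding set_integrable_def
proof (rule integrableI_bounded)
  show "(\<lambda>x. indicator {0..} x *\<^sub>R u x) \<in> borel_measurable lborel"
    using borel_measurable_continuous_on_indicator[OF _ assms(1)] by simp
  have "(\<integral>\<^sup>+x. ennreal (norm (indicator {0..} x *\<^sub>R u x)) \<partial>lborel) = (\<integral>\<^sup>+t. ennreal \<bar>u t\<bar> * indicator {0..} t \<partial>lborel)"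
    by (intro nn_integral_cong) (auto simp: indicator_def)
  then show "(\<integral>\<^sup>+x. ennreal (norm (indicator {0..} x *\<^sub>R u x)) \<partial>lborel) < \<infinity>"
    using assms(2) by simp
qed

lemma int_mult_bounded:
  fixes u w :: "real \<Rightarrow> real"
  assumes u: "set_integrable lborel {0..} u" and w: "continuous_on UNIV w"
    and B: "\<And>t. 0 \<le> t \<Longrightarrow> \<bar>w t\<bar> \<le> B"
  shows "set_integrable lborel {0..} (\<lambda>t. w t * u t)"
proof -
  have i: "integrable lborel (\<lambda>x. B * (indicator {0..} x *\<^sub>R u x))"
    using u unfolding set_integrable_def by simp
  have wm: "w \<in> borel_measurable lborel"
    using borel_measurable_continuous_onI[OF w] by simp
  have um: "(\<lambda>x. indicator {0..} x *\<^sub>R u x) \<in> borel_measurable lborel"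
    using u unfolding set_integrable_def by (rule borel_measurable_integrable)
  have "(\<lambda>x. indicator {0..} x *\<^sub>R (w x * u x)) = (\<lambda>x. w x * (indicator {0..} x *\<^sub>R u x))"
    by (auto simp: indicator_def)
  then have m: "(\<lambda>x. indicator {0..} x *\<^sub>R (w x * u x)) \<in> borel_measurable lborel"
    using wm um by simp
  have B0: "0 \<le> B" using B[of 0] by linarith
  have a: "AE x in lborel. norm (indicator {0..} x *\<^sub>R (w x * u x)) \<le> norm (B * (indicator {0..} x *\<^sub>R u x))"
  proof (rule AE_I2)
    fix x
    show "norm (indicator {0..} x *\<^sub>R (w x * u x)) \<le> norm (B * (indicator {0..} x *\<^sub>R u x))"
    proof (cases "0 \<le> x")
      case True
      then show ?thesis using B[OF True] B0 by (simp add: abs_mult mult_right_mono)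
    qed (simp)
  qed
  show ?thesis unfolding set_integrable_def
    by (rule Bochner_Integration.integrable_bound[OF i m a])
qed

lemma set_integral_sum_real:
  fixes g :: "'a \<Rightarrow> real \<Rightarrow> real"
  assumes "\<And>k. k \<in> I \<Longrightarrow> set_integrable lborel A (g k)"
  shows "(LBINT x:A. (\<Sum>k\<in>I. g k x)) = (\<Sum>k\<in>I. LBINT x:A. g k x)"
    and "set_integrable lborel A (\<lambda>x. \<Sum>k\<in>I. g k x)"
proof -
  have e: "(\<lambda>x. indicator A x *\<^sub>R (\<Sum>k\<in>I. g k x)) = (\<lambda>x. \<Sum>k\<in>I. indicator A x *\<^sub>R g k x)"
    by (simp add: sum_distrib_left)
  show "(LBINT x:A. (\<Sum>k\<in>I. g k x)) = (\<Sum>k\<in>I. LBINT x:A. g k x)"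
    unfolding set_lebesgue_integral_def e
    by (rule Bochner_Integration.integral_sum[where f="\<lambda>k x. indicator A x *\<^sub>R g k x"]) (use assms in \<open>auto simp: set_integrable_def\<close>)
  show "set_integrable lborel A (\<lambda>x. \<Sum>k\<in>I. g k x)"
    unfolding set_integrable_def e
    by (rule Bochner_Integration.integrable_sum[where f="\<lambda>k x. indicator A x *\<^sub>R g k x"]) (use assms in \<open>auto simp: set_integrable_def\<close>)
qed

lemma shift_eq:
  fixes v :: "real \<Rightarrow> real"
  assumes e: "0 < e"
  shows "(LBINT t:{e<..}. v t) = (LBINT s:{0..}. v (s + e))"
proof -
  have "(LBINT t:{e<..}. v t) = (\<integral>s. indicator {e<..} (e + 1 * s) *\<^sub>R v (e + 1 * s) \<partial>lborel)"
    unfolding set_lebesgue_integral_def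
    using lborel_integral_real_affine[of 1 "\<lambda>t. indicator {e<..} t *\<^sub>R v t" e] by simp
  also have "\<dots> = (\<integral>s. indicator {0..} s *\<^sub>R v (s + e) \<partial>lborel)"
    by (rule integral_discrete_difference[where X="{0}"])
       (auto simp: indicator_def add.commute)
  finally show ?thesis unfolding set_lebesgue_integral_def .
qed

lemma shift_int:
  fixes u :: "real \<Rightarrow> real"
  assumes u: "set_integrable lborel {0..} u" and e: "0 \<le> e"
  shows "set_integrable lborel {0..} (\<lambda>s. u (s + e))"
proof -
  have "set_integrable lborel {e..} u"
    by (rule set_integrable_subset[OF u]) (use e in auto)
  then have "integrable lborel (\<lambda>s. indicator {e..} (e + 1 * s) *\<^sub>R u (e + 1 * s))"
    unfolding set_integrable_def
    by (rule lborel_integrable_real_affine) simp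
  then show ?thesis
    unfolding set_integrable_def
    by (rule back_subst[where P="integrable lborel"]) (auto simp: indicator_def add.commute)
qed

lemma ftc_right:
  fixes v :: "real \<Rightarrow> real"
  assumes vc: "continuous_on {0..} v"
  shows "((\<lambda>e. (LBINT t:{0..e}. v t) / e) \<longlongrightarrow> v 0) (at_right 0)"
proof -
  have c01: "continuous_on {0..1} v"
    by (rule continuous_on_subset[OF vc]) auto
  have d1: "((\<lambda>u. integral {0..u} v) has_real_derivative v 0) (at 0 within {0..1})"
    unfolding has_real_derivative_iff_has_vector_derivative
    by (rule integral_has_vector_derivative[OF c01]) simp
  have d2: "((\<lambda>y. (integral {0..y} v - integral {0..0} v) / (y - 0)) \<longlongrightarrow> v 0) (at 0 within {0..1})"
    using d1 unfolding has_field_derivative_iff .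
  have z: "integral {0..0::real} v = 0"
    using integral_singleton[of 0 v] by simp
  have lim: "((\<lambda>y. integral {0..y} v / y) \<longlongrightarrow> v 0) (at_right 0)"
    using d2 unfolding at_within_Icc_at_right[OF zero_less_one] z by simp
  have ev: "\<forall>\<^sub>F y in at_right 0. integral {0..y} v / y = (LBINT t:{0..y}. v t) / y"
  proof (rule eventually_mono[OF eventually_at_right_less])
    fix y :: real assume "0 < y"
    have "continuous_on {0..y} v"
      by (rule continuous_on_subset[OF vc]) auto
    then have si: "set_integrable lborel {0..y} v"
      unfolding set_integrable_def
      by (rule borel_integrable_compact[rotated]) simp
    show "integral {0..y} v / y = (LBINT t:{0..y}. v t) / y"
      by (simp only: set_borel_integral_eq_integral(2)[OF si])
  qed
  show ?thesis
    by (rule iffD1[OF tendsto_cong[OF ev] lim])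
qed

lemma shift_limit:
  fixes u w :: "real \<Rightarrow> real" and h :: "real \<Rightarrow> real \<Rightarrow> real"
  assumes uc: "continuous_on {0..} u" and ui: "set_integrable lborel {0..} u"
    and wc: "continuous_on UNIV w" and wb: "\<And>t. 0 \<le> t \<Longrightarrow> \<bar>w t\<bar> \<le> 1"
    and hb: "\<And>s e. 0 \<le> s \<Longrightarrow> 0 < e \<Longrightarrow> \<bar>u (s + e) - u s\<bar> \<le> h s e"
    and hm: "\<And>s. 0 \<le> s \<Longrightarrow> mono_on {0<..} (h s)"
    and e0: "0 < e0"
    and hi: "\<And>e. 0 < e \<Longrightarrow> e < e0 \<Longrightarrow> (\<integral>\<^sup>+s. ennreal (h s e) * indicator {0..} s \<partial>lborel) < \<infinity>"
  shows "((\<lambda>e. LBINT s:{0..}. w s * u (s + e)) \<longlongrightarrow> (LBINT s:{0..}. w s * u s)) (at_right 0)"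
proof (rule tendsto_at_right_sequentially[OF e0])
  fix S :: "nat \<Rightarrow> real"
  assume Spos: "\<And>n. 0 < S n" and Sb: "\<And>n. S n < e0" and Sd: "decseq S" and Sl: "S \<longlonglongrightarrow> 0"
  define d where "d n x = \<bar>indicator {0..} x * (u (x + S n) - u x)\<bar>" for n x
  define E where "E x = (SUP n. d n x)" for x
  have bnd: "d n x \<le> indicator {0..} x * h x (S 0)" for x n
  proof (cases "0 \<le> x")
    case True
    have "\<bar>u (x + S n) - u x\<bar> \<le> h x (S n)" by (rule hb[OF True Spos])
    also have "\<dots> \<le> h x (S 0)"
      by (rule mono_onD[OF hm[OF True]]) (use Spos decseqD[OF Sd, of 0 n] in auto)
    finally show ?thesis using True by (simp add: d_def)
  qed (simp add: d_def)
  have bdd: "bdd_above (range (\<lambda>n. d n x))" for x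
    by (rule bdd_aboveI[where M="indicator {0..} x * h x (S 0)"]) (auto simp: bnd)
  have E_ge: "d n x \<le> E x" for n x
    unfolding E_def by (rule cSUP_upper[OF _ bdd]) simp
  have E_le: "E x \<le> indicator {0..} x * h x (S 0)" for x
    unfolding E_def by (rule cSUP_least) (auto simp: bnd)
  have E_nonneg: "0 \<le> E x" for x
    using E_ge[of 0 x] abs_ge_zero[of "indicator {0..} x * (u (x + S 0) - u x)"] unfolding d_def by linarith
  have shm: "(\<lambda>x. indicator {0..} x *\<^sub>R u (x + c)) \<in> borel_measurable lborel" if "0 \<le> c" for c
    using shift_int[OF ui that] unfolding set_integrable_def by (rule borel_measurable_integrable)
  have um: "(\<lambda>x. indicator {0..} x *\<^sub>R u x) \<in> borel_measurable lborel"
    using ui unfolding set_integrable_def by (rule borel_measurable_integrable)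
  have dm: "d n \<in> borel_measurable lborel" for n
  proof -
    have "d n = (\<lambda>x. \<bar>indicator {0..} x *\<^sub>R u (x + S n) - indicator {0..} x *\<^sub>R u x\<bar>)"
      by (auto simp: d_def fun_eq_iff algebra_simps)
    then show ?thesis using shm[of "S n"] um Spos[of n] by simp
  qed
  have Em: "E \<in> borel_measurable lborel"
    unfolding E_def by (rule borel_measurable_cSUP) (use dm bdd in auto)
  have Ei: "integrable lborel E"
  proof (rule integrableI_bounded[OF Em])
    have "(\<integral>\<^sup>+x. ennreal (norm (E x)) \<partial>lborel) \<le> (\<integral>\<^sup>+s. ennreal (h s (S 0)) * indicator {0..} s \<partial>lborel)"
    proof (rule nn_integral_mono)
      fix x
      show "ennreal (norm (E x)) \<le> ennreal (h x (S 0)) * indicator {0..} x"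
        using E_le[of x] E_nonneg[of x] by (cases "0 \<le> x") (auto simp: indicator_def)
    qed
    also have "\<dots> < \<infinity>" by (rule hi[OF Spos Sb])
    finally show "(\<integral>\<^sup>+x. ennreal (norm (E x)) \<partial>lborel) < \<infinity>" .
  qed
  have wm: "w \<in> borel_measurable lborel"
    using borel_measurable_continuous_onI[OF wc] by simp
  define sq where "sq n x = indicator {0..} x *\<^sub>R (w x * u (x + S n))" for n x
  define fl where "fl x = indicator {0..} x *\<^sub>R (w x * u x)" for x
  have sqm: "sq n \<in> borel_measurable lborel" for n
  proof -
    have "sq n = (\<lambda>x. w x * (indicator {0..} x *\<^sub>R u (x + S n)))"
      by (auto simp: sq_def fun_eq_iff)
    then show ?thesis using shm[of "S n"] wm Spos[of n] by simp
  qed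
  have flm: "fl \<in> borel_measurable lborel"
  proof -
    have "fl = (\<lambda>x. w x * (indicator {0..} x *\<^sub>R u x))"
      by (auto simp: fl_def fun_eq_iff)
    then show ?thesis using um wm by simp
  qed
  have Wi: "integrable lborel (\<lambda>x. norm (indicator {0..} x *\<^sub>R u x) + E x)"
    using ui Ei unfolding set_integrable_def by auto
  have "(\<lambda>n. integral\<^sup>L lborel (sq n)) \<longlonglongrightarrow> integral\<^sup>L lborel fl"
  proof (rule integral_dominated_convergence[OF flm sqm Wi])
    show "AE x in lborel. (\<lambda>n. sq n x) \<longlonglongrightarrow> fl x"
    proof (rule AE_I2)
      fix x
      show "(\<lambda>n. sq n x) \<longlonglongrightarrow> fl x"
      proof (cases "0 \<le> x")
        case True
        have "(\<lambda>n. x + S n) \<longlonglongrightarrow> x + 0" by (intro tendsto_intros Sl)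
        then have "(\<lambda>n. u (x + S n)) \<longlonglongrightarrow> u x"
          by (intro continuous_on_tendsto_compose[OF uc] always_eventually allI)
             (simp_all add: True add_nonneg_nonneg less_imp_le[OF Spos])
        then show ?thesis unfolding sq_def fl_def by (intro tendsto_intros)
      qed (simp add: sq_def fl_def)
    qed
    show "AE x in lborel. norm (sq n x) \<le> norm (indicator {0..} x *\<^sub>R u x) + E x" for n
    proof (rule AE_I2)
      fix x
      show "norm (sq n x) \<le> norm (indicator {0..} x *\<^sub>R u x) + E x"
      proof (cases "0 \<le> x")
        case True
        have "norm (sq n x) = \<bar>w x\<bar> * \<bar>u (x + S n)\<bar>" using True by (simp add: sq_def abs_mult)
        also have "\<dots> \<le> \<bar>u (x + S n)\<bar>" using wb[OF True] by (simp add: mult_left_le_one_le)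
        also have "\<dots> \<le> \<bar>u x\<bar> + d n x" using True by (simp add: d_def)
        also have "\<dots> \<le> norm (indicator {0..} x *\<^sub>R u x) + E x" using True E_ge[of n x] by simp
        finally show ?thesis .
      qed (simp add: sq_def E_nonneg)
    qed
  qed
  then show "(\<lambda>n. LBINT s:{0..}. w s * u (s + S n)) \<longlonglongrightarrow> (LBINT s:{0..}. w s * u s)"
    unfolding set_lebesgue_integral_def sq_def fl_def by simp
qed




locale wsetting =
  fixes D :: "'n::finite \<Rightarrow> (real^'n) set" and f :: "real \<Rightarrow> 'n \<Rightarrow> real^'n \<Rightarrow> real"
  assumes DE: "\<And>i. D i \<subseteq> Erow i" and cC: "cond_C D f" and cI: "cond_I D f" and cH: "cond_H D f"
begin

lemma adm_row: "Q \<in> admissible D \<Longrightarrow> Q $ j \<in> D j"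
  by (simp add: admissible_def)

lemma adm_gen: "Q \<in> admissible D \<Longrightarrow> gen Q"
  using DE by (auto simp: admissible_def gen_def)

lemma u_cont: "Q \<in> admissible D \<Longrightarrow> continuous_on {0..} (\<lambda>t. f t j (Q $ j))"
  using cC adm_row by (auto simp: cond_C_def)

lemma u_int: 
  assumes Q: "Q \<in> admissible D"
  shows "set_integrable lborel {0..} (\<lambda>t. f t j (Q $ j))"
proof (rule int_of_nn[OF u_cont[OF Q]])
  define c where "c = 1 + (\<Sum>k\<in>UNIV. norm (Q $ k))"
  have nk: "norm (Q $ j) \<le> (\<Sum>k\<in>UNIV. norm (Q $ k))"
    by (rule member_le_sum[where f="\<lambda>k. norm (Q $ k)"]) auto
  have sn: "0 \<le> (\<Sum>k\<in>UNIV. norm (Q $ k))" by (rule sum_nonneg) simp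
  have c: "c > 0" "norm (Q $ j) \<le> c"
    using nk sn by (auto simp: c_def)
  let ?S = "{(i,q). q \<in> D i \<and> norm q \<le> c}"
  have fin: "(\<integral>\<^sup>+ t. (SUP iq\<in>?S. ennreal \<bar>f t (fst iq) (snd iq)\<bar>) * indicator {0..} t \<partial>lborel) < \<infinity>"
    using cI c(1) by (auto simp: cond_I_def)
  have mem: "(j, Q $ j) \<in> ?S" using c(2) adm_row[OF Q] by auto
  have "(\<integral>\<^sup>+t. ennreal \<bar>f t j (Q $ j)\<bar> * indicator {0..} t \<partial>lborel)
      \<le> (\<integral>\<^sup>+ t. (SUP iq\<in>?S. ennreal \<bar>f t (fst iq) (snd iq)\<bar>) * indicator {0..} t \<partial>lborel)"
  proof (rule nn_integral_mono)
    fix t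
    have "ennreal \<bar>f t j (Q $ j)\<bar> \<le> (SUP iq\<in>?S. ennreal \<bar>f t (fst iq) (snd iq)\<bar>)"
      using SUP_upper[OF mem, of "\<lambda>iq. ennreal \<bar>f t (fst iq) (snd iq)\<bar>"] by simp
    then show "ennreal \<bar>f t j (Q $ j)\<bar> * indicator {0..} t
        \<le> (SUP iq\<in>?S. ennreal \<bar>f t (fst iq) (snd iq)\<bar>) * indicator {0..} t"
      by (rule mult_right_mono) simp
  qed
  then show "(\<integral>\<^sup>+t. ennreal \<bar>f t j (Q $ j)\<bar> * indicator {0..} t \<partial>lborel) < \<infinity>"
    using fin by (rule le_less_trans)
qed

lemma trans_cont: "continuous_on UNIV (\<lambda>t. trans Q t $ i $ j)"
  by (intro continuous_at_imp_continuous_on ballI trans_isCont)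

lemma v_int:
  assumes Q: "gen Q" and Qs: "Qs \<in> admissible D" and e: "0 \<le> e"
  shows "set_integrable lborel {0..} (\<lambda>t. \<Sum>j\<in>UNIV. trans Q t $ i $ j * f (t + e) j (Qs $ j))"
proof (rule set_integral_sum_real(2))
  fix j
  show "set_integrable lborel {0..} (\<lambda>t. trans Q t $ i $ j * f (t + e) j (Qs $ j))"
    by (rule int_mult_bounded[OF shift_int[OF u_int[OF Qs] e] trans_cont trans_abs_le1[OF Q]])
qed

definition Gs :: "real^'n^'n \<Rightarrow> real \<Rightarrow> 'n \<Rightarrow> real" where
  "Gs Qs e k = (LBINT s:{0..}. (\<Sum>j\<in>UNIV. trans Qs s $ k $ j * f (s + e) j (Qs $ j)))"

definition I1 :: "real^'n^'n \<Rightarrow> 'n \<Rightarrow> real \<Rightarrow> real" where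
  "I1 Q i e = (LBINT t:{0..e}. (\<Sum>j\<in>UNIV. trans Q t $ i $ j * f t j (Q $ j)))"

lemma lemA:
  assumes Qs: "Qs \<in> admissible D" and e: "0 < e"
  shows "(LBINT t:{e<..}. (\<Sum>j\<in>UNIV. (M ** trans Qs (t - e)) $ i $ j * f t j (Qs $ j)))
       = (\<Sum>k\<in>UNIV. M $ i $ k * Gs Qs e k)"
proof -
  have "(LBINT t:{e<..}. (\<Sum>j\<in>UNIV. (M ** trans Qs (t - e)) $ i $ j * f t j (Qs $ j)))
     = (LBINT s:{0..}. (\<Sum>j\<in>UNIV. (M ** trans Qs (s + e - e)) $ i $ j * f (s + e) j (Qs $ j)))"
    by (rule shift_eq[OF e])
  also have "\<dots> = (LBINT s:{0..}. (\<Sum>k\<in>UNIV. M $ i $ k * (\<Sum>j\<in>UNIV. trans Qs s $ k $ j * f (s + e) j (Qs $ j))))"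
  proof -
    have "(\<Sum>j\<in>UNIV. (M ** trans Qs (s + e - e)) $ i $ j * f (s + e) j (Qs $ j))
        = (\<Sum>k\<in>UNIV. M $ i $ k * (\<Sum>j\<in>UNIV. trans Qs s $ k $ j * f (s + e) j (Qs $ j)))" for s
    proof -
      have "(\<Sum>j\<in>UNIV. (M ** trans Qs (s + e - e)) $ i $ j * f (s + e) j (Qs $ j))
          = (\<Sum>j\<in>UNIV. \<Sum>k\<in>UNIV. M $ i $ k * (trans Qs s $ k $ j * f (s + e) j (Qs $ j)))"
        by (simp add: matrix_matrix_mult_def sum_distrib_right mult.assoc)
      also have "\<dots> = (\<Sum>k\<in>UNIV. \<Sum>j\<in>UNIV. M $ i $ k * (trans Qs s $ k $ j * f (s + e) j (Qs $ j)))"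
        by (rule sum.swap)
      also have "\<dots> = (\<Sum>k\<in>UNIV. M $ i $ k * (\<Sum>j\<in>UNIV. trans Qs s $ k $ j * f (s + e) j (Qs $ j)))"
        by (simp add: sum_distrib_left)
      finally show ?thesis .
    qed
    then show ?thesis by simp
  qed
  also have "\<dots> = (\<Sum>k\<in>UNIV. LBINT s:{0..}. M $ i $ k * (\<Sum>j\<in>UNIV. trans Qs s $ k $ j * f (s + e) j (Qs $ j)))"
    by (rule set_integral_sum_real(1))
       (use v_int[OF adm_gen[OF Qs] Qs less_imp_le[OF e]] in auto)
  also have "\<dots> = (\<Sum>k\<in>UNIV. M $ i $ k * Gs Qs e k)"
    by (simp add: Gs_def)
  finally show ?thesis .
qed

lemma lemB:
  assumes Qs: "Qs \<in> admissible D" and e: "0 < e"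
  shows "payoff f i Qs = I1 Qs i e + (\<Sum>k\<in>UNIV. trans Qs e $ i $ k * Gs Qs e k)"
proof -
  let ?V = "\<lambda>t. \<Sum>j\<in>UNIV. trans Qs t $ i $ j * f t j (Qs $ j)"
  have vi: "set_integrable lborel {0..} ?V"
    using v_int[OF adm_gen[OF Qs] Qs order_refl, of i] by simp
  have un: "{0..} = {0..e} \<union> {e<..}" using e by auto
  have "payoff f i Qs = (LBINT t:{0..e} \<union> {e<..}. ?V t)"
    unfolding payoff_def un[symmetric] ..
  also have "\<dots> = (LBINT t:{0..e}. ?V t) + (LBINT t:{e<..}. ?V t)"
  proof (rule set_integral_Un)
    show "set_integrable lborel {0..e} ?V"
      by (rule set_integrable_subset[OF vi]) auto
    show "set_integrable lborel {e<..} ?V"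
      by (rule set_integrable_subset[OF vi]) (use e in auto)
  qed auto
  also have "(LBINT t:{e<..}. ?V t)
      = (LBINT t:{e<..}. (\<Sum>j\<in>UNIV. (trans Qs e ** trans Qs (t - e)) $ i $ j * f t j (Qs $ j)))"
  proof (rule set_lebesgue_integral_cong)
    show "\<forall>x. x \<in> {e<..} \<longrightarrow> ?V x = (\<Sum>j\<in>UNIV. (trans Qs e ** trans Qs (x - e)) $ i $ j * f x j (Qs $ j))"
    proof (intro allI impI)
      fix x
      have "trans Qs x = trans Qs e ** trans Qs (x - e)"
        using trans_add[of Qs e "x - e"] by simp
      then show "?V x = (\<Sum>j\<in>UNIV. (trans Qs e ** trans Qs (x - e)) $ i $ j * f x j (Qs $ j))"
        by simp
    qed
  qed simp
  also have "\<dots> = (\<Sum>k\<in>UNIV. trans Qs e $ i $ k * Gs Qs e k)"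
    by (rule lemA[OF Qs e])
  finally show ?thesis by (simp add: I1_def)
qed

lemma lemPC:
  assumes Qs: "Qs \<in> admissible D" and e: "0 < e"
  shows "payoff_concat f i Q e Qs = I1 Q i e + (\<Sum>k\<in>UNIV. trans Q e $ i $ k * Gs Qs e k)"
  unfolding payoff_concat_def lemA[OF Qs e] I1_def ..

lemma lemC:
  assumes Q: "Q \<in> admissible D"
  shows "((\<lambda>e. I1 Q i e / e) \<longlongrightarrow> f 0 i (Q $ i)) (at_right 0)"
proof -
  let ?v = "\<lambda>t. \<Sum>j\<in>UNIV. trans Q t $ i $ j * f t j (Q $ j)"
  have vc: "continuous_on {0..} ?v"
    by (intro continuous_on_sum continuous_on_mult continuous_on_subset[OF trans_cont] u_cont[OF Q]) auto
  have m: "mat 1 $ i $ j * f 0 j (Q $ j) = (if i = j then f 0 j (Q $ j) else 0)" for j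
    by (simp add: mat_def)
  have "?v 0 = f 0 i (Q $ i)"
    by (simp only: trans_0 m) simp
  then show ?thesis using ftc_right[OF vc] unfolding I1_def by simp
qed

lemma lemDeriv:
  "((\<lambda>e. (trans Q e $ i $ k - mat 1 $ i $ k) / e) \<longlongrightarrow> Q $ i $ k) (at_right 0)"
proof -
  have "((\<lambda>y. (trans Q y $ i $ k - trans Q 0 $ i $ k) / (y - 0)) \<longlongrightarrow> Q $ i $ k) (at 0)"
    using trans_deriv0[of Q i k] unfolding has_field_derivative_iff .
  then have "((\<lambda>y. (trans Q y $ i $ k - mat 1 $ i $ k) / y) \<longlongrightarrow> Q $ i $ k) (at 0)"
    by (simp add: trans_0)
  then show ?thesis
    by (rule tendsto_mono[rotated]) (simp add: at_le)
qed

lemma lemD: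
  assumes Qs: "Qs \<in> admissible D"
  shows "((\<lambda>e. Gs Qs e k) \<longlongrightarrow> payoff f k Qs) (at_right 0)"
proof -
  obtain h :: "real \<Rightarrow> real \<Rightarrow> 'n \<Rightarrow> real^'n \<Rightarrow> real" where
    H1: "\<forall>t eps i q. t \<ge> 0 \<longrightarrow> eps > 0 \<longrightarrow> q \<in> D i \<longrightarrow>
        0 \<le> h t eps i q \<and> \<bar>f (t + eps) i q - f t i q\<bar> \<le> h t eps i q" and
    H2: "\<forall>t i q. t \<ge> 0 \<longrightarrow> q \<in> D i \<longrightarrow> mono_on {0<..} (\<lambda>eps. h t eps i q)" and
    H4: "\<forall>i. \<forall>q\<in>D i. \<exists>e0>0. \<forall>eps. 0 < eps \<and> eps < e0 \<longrightarrow>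
        (\<integral>\<^sup>+ t. ennreal (h t eps i q) * indicator {0..} t \<partial>lborel) < \<infinity>"
    using cH unfolding cond_H_def by (elim exE conjE) (rule that)
  have h1: "\<bar>f (t + eps) i q - f t i q\<bar> \<le> h t eps i q" if "t \<ge> 0" "eps > 0" "q \<in> D i" for t eps i q
    using H1 that by simp
  have h2: "mono_on {0<..} (\<lambda>eps. h t eps i q)" if "t \<ge> 0" "q \<in> D i" for t i q
    using H2 that by simp
  have h4: "\<exists>e0>0. \<forall>eps. 0 < eps \<and> eps < e0 \<longrightarrow>
        (\<integral>\<^sup>+ t. ennreal (h t eps i q) * indicator {0..} t \<partial>lborel) < \<infinity>" if "q \<in> D i" for i q
    using H4 that by simp
  have lim: "((\<lambda>e. LBINT s:{0..}. trans Qs s $ k $ j * f (s + e) j (Qs $ j))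
      \<longlongrightarrow> (LBINT s:{0..}. trans Qs s $ k $ j * f s j (Qs $ j))) (at_right 0)" for j
  proof -
    have q: "Qs $ j \<in> D j" by (rule adm_row[OF Qs])
    obtain e0 where e0: "e0 > 0" and hi: "\<And>eps. 0 < eps \<Longrightarrow> eps < e0 \<Longrightarrow>
        (\<integral>\<^sup>+ t. ennreal (h t eps j (Qs $ j)) * indicator {0..} t \<partial>lborel) < \<infinity>"
      using h4[OF q] by auto
    show ?thesis
    proof (rule shift_limit[where h="\<lambda>s e. h s e j (Qs $ j)", OF u_cont[OF Qs] u_int[OF Qs] trans_cont _ _ _ e0 hi])
      show "\<And>t. 0 \<le> t \<Longrightarrow> \<bar>trans Qs t $ k $ j\<bar> \<le> 1"
        by (rule trans_abs_le1[OF adm_gen[OF Qs]])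
      show "\<And>s e. 0 \<le> s \<Longrightarrow> 0 < e \<Longrightarrow> \<bar>f (s + e) j (Qs $ j) - f s j (Qs $ j)\<bar> \<le> h s e j (Qs $ j)"
        using h1 q by simp
      show "\<And>s. 0 \<le> s \<Longrightarrow> mono_on {0<..} (\<lambda>e. h s e j (Qs $ j))"
        using h2 q by simp
    qed
  qed
  have L: "((\<lambda>e. \<Sum>j\<in>UNIV. LBINT s:{0..}. trans Qs s $ k $ j * f (s + e) j (Qs $ j))
      \<longlongrightarrow> (\<Sum>j\<in>UNIV. LBINT s:{0..}. trans Qs s $ k $ j * f s j (Qs $ j))) (at_right 0)"
    by (intro tendsto_sum lim)
  have P: "(\<Sum>j\<in>UNIV. LBINT s:{0..}. trans Qs s $ k $ j * f s j (Qs $ j)) = payoff f k Qs"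
    unfolding payoff_def
    by (rule set_integral_sum_real(1)[symmetric])
       (rule int_mult_bounded[OF u_int[OF Qs] trans_cont trans_abs_le1[OF adm_gen[OF Qs]]])
  have ev: "\<forall>\<^sub>F e in at_right 0. (\<Sum>j\<in>UNIV. LBINT s:{0..}. trans Qs s $ k $ j * f (s + e) j (Qs $ j)) = Gs Qs e k"
  proof (rule eventually_mono[OF eventually_at_right_less])
    fix e :: real assume e: "0 < e"
    show "(\<Sum>j\<in>UNIV. LBINT s:{0..}. trans Qs s $ k $ j * f (s + e) j (Qs $ j)) = Gs Qs e k"
      unfolding Gs_def
      by (rule set_integral_sum_real(1)[symmetric])
         (rule int_mult_bounded[OF shift_int[OF u_int[OF Qs] less_imp_le[OF e]] trans_cont trans_abs_le1[OF adm_gen[OF Qs]]])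
  qed
  show ?thesis
    using iffD1[OF tendsto_cong[OF ev] L] unfolding P .
qed

lemma main_limit:
  assumes Q: "Q \<in> admissible D" and Qs: "Qs \<in> admissible D"
  shows "((\<lambda>e. (payoff f i Qs - payoff_concat f i Q e Qs) / e)
     \<longlongrightarrow> Gamma f Qs i (Qs $ i) - Gamma f Qs i (Q $ i)) (at_right 0)"
proof -
  define R where "R e k = (trans Qs e $ i $ k - mat 1 $ i $ k) / e - (trans Q e $ i $ k - mat 1 $ i $ k) / e" for e k
  have L: "((\<lambda>e. I1 Qs i e / e - I1 Q i e / e + (\<Sum>k\<in>UNIV. R e k * Gs Qs e k))
     \<longlongrightarrow> f 0 i (Qs $ i) - f 0 i (Q $ i) + (\<Sum>k\<in>UNIV. (Qs $ i $ k - Q $ i $ k) * payoff f k Qs)) (at_right 0)"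
    unfolding R_def by (intro tendsto_intros lemC[OF Qs] lemC[OF Q] lemDeriv lemD[OF Qs])
  have ev: "\<forall>\<^sub>F e in at_right 0. I1 Qs i e / e - I1 Q i e / e + (\<Sum>k\<in>UNIV. R e k * Gs Qs e k)
      = (payoff f i Qs - payoff_concat f i Q e Qs) / e"
  proof (rule eventually_mono[OF eventually_at_right_less])
    fix e :: real assume e: "0 < e"
    have p: "R e k * Gs Qs e k = (trans Qs e $ i $ k * Gs Qs e k - trans Q e $ i $ k * Gs Qs e k) / e" for k
      using e by (simp add: R_def field_simps)
    have s: "(\<Sum>k\<in>UNIV. R e k * Gs Qs e k)
        = ((\<Sum>k\<in>UNIV. trans Qs e $ i $ k * Gs Qs e k) - (\<Sum>k\<in>UNIV. trans Q e $ i $ k * Gs Qs e k)) / e"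
      unfolding p sum_divide_distrib[symmetric] sum_subtractf ..
    show "I1 Qs i e / e - I1 Q i e / e + (\<Sum>k\<in>UNIV. R e k * Gs Qs e k)
      = (payoff f i Qs - payoff_concat f i Q e Qs) / e"
      unfolding s lemB[OF Qs e, of i] lemPC[OF Qs e, of i Q]
      by (simp add: diff_divide_distrib add_divide_distrib)
  qed
  have G: "Gamma f Qs i (Qs $ i) - Gamma f Qs i (Q $ i)
      = f 0 i (Qs $ i) - f 0 i (Q $ i) + (\<Sum>k\<in>UNIV. (Qs $ i $ k - Q $ i $ k) * payoff f k Qs)"
    by (simp add: Gamma_def inner_vec_def left_diff_distrib sum_subtractf)
  show ?thesis
    unfolding G using iffD1[OF tendsto_cong[OF ev] L] .
qed

end

lemma main_equiv:
  fixes D :: "'n::finite \<Rightarrow> (real^'n) set"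
    and f :: "real \<Rightarrow> 'n \<Rightarrow> real^'n \<Rightarrow> real"
    and Qs :: "real^'n^'n"
  assumes "\<And>i. D i \<subseteq> Erow i"
    and "cond_C D f" and "cond_I D f" and "cond_H D f"
    and Qs: "Qs \<in> admissible D"
  shows "weak_equilibrium D f Qs \<longleftrightarrow>
           (\<forall>i. \<forall>Q\<in>admissible D. Gamma f Qs i (Qs $ i) \<ge> Gamma f Qs i (Q $ i))"
proof -
  interpret wsetting D f using assms by unfold_locales auto
  have li: "Liminf (at_right 0) (\<lambda>eps. ereal ((payoff f i Qs - payoff_concat f i Q eps Qs) / eps))
      = ereal (Gamma f Qs i (Qs $ i) - Gamma f Qs i (Q $ i))" if Q: "Q \<in> admissible D" for Q i
    by (rule lim_imp_Liminf[OF trivial_limit_at_right_real tendsto_ereal[OF main_limit[OF Q Qs]]])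
  have "weak_equilibrium D f Qs \<longleftrightarrow>
      (\<forall>Q\<in>admissible D. \<forall>i. 0 \<le> Gamma f Qs i (Qs $ i) - Gamma f Qs i (Q $ i))"
    unfolding weak_equilibrium_def using Qs by (simp add: li)
  then show ?thesis by auto
qed


theorem mainTheorem2:
  fixes D :: "'n::finite \<Rightarrow> (real^'n) set"
    and f :: "real \<Rightarrow> 'n \<Rightarrow> real^'n \<Rightarrow> real"
    and Qs :: "real^'n^'n"
  assumes "\<And>i. D i \<subseteq> Erow i"
    and "cond_C D f" and "cond_I D f" and "cond_H D f"
    and "Qs \<in> admissible D"
  shows "weak_equilibrium D f Qs \<longleftrightarrow>
           (\<forall>i. \<forall>Q\<in>admissible D. Gamma f Qs i (Qs $ i) \<ge> Gamma f Qs i (Q $ i))"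
  by (rule main_equiv[OF assms])

end
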